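(* Let $n\in\mathbb{N}$, $\alpha\in(0,1)$ and $p\in\left[1,\frac1\alpha\right)$. There exists a constant $c_{n,\alpha,p}>0$, depending only on $n$, $\alpha$ and $p$, such that $$\|\nabla^\alpha\chi_{B_r(x)}\|_{L^p(\mathbb{R}^n;\mathbb{R}^n)}=c_{n,\alpha,p}\,r^{\frac np-\alpha}$$ for all $x\in\mathbb{R}^n$ and $r>0$.
   Context: $B_r(x)$ is the open ball of center $x$ and radius $r$, $\chi_E$ the indicator of $E$. For $\alpha\in(0,1)$, $\mu_{n,\alpha}=2^{\alpha}\pi^{-n/2}\Gamma\left(\frac{n+\alpha+1}{2}\right)/\Gamma\left(\frac{1-\alpha}{2}\right)$ and $\nabla^\alpha\chi_{B_r(x)}(y)=\mu_{n,\alpha}\int_{\mathbb{R}^n}\frac{(z-y)(\chi_{B_r(x)}(z)-\chi_{B_r(x)}(y))}{|z-y|^{n+\alpha+1}}\,dz$ (the fractional gradient of $\chi_{B_r(x)}$, defined for a.e. $y$). *)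

theory Defs
  imports "HOL-Analysis.Analysis"
begin

definition frac_mu :: "nat \<Rightarrow> real \<Rightarrow> real" where
  "frac_mu n \<alpha> = 2 powr \<alpha> * pi powr (- real n / 2) * Gamma ((real n + \<alpha> + 1) / 2)
                   / Gamma ((1 - \<alpha>) / 2)"

text \<open>Fractional gradient of the indicator of a set E at the point y (Lebesgue integral
  in z; defined for a.e. y).\<close>
definition frac_grad_ind :: "real \<Rightarrow> ('a::euclidean_space) set \<Rightarrow> 'a \<Rightarrow> 'a" where
  "frac_grad_ind \<alpha> E y = frac_mu DIM('a) \<alpha> *\<^sub>R
     (\<integral>z. ((indicator E z - indicator E y) / norm (z - y) powr (real DIM('a) + \<alpha> + 1))
              *\<^sub>R (z - y) \<partial>lborel)"

definition Lp_norm :: "real \<Rightarrow> (('a::euclidean_space) \<Rightarrow> 'b::real_normed_vector) \<Rightarrow> ennreal" where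
  "Lp_norm p f = (let I = (\<integral>\<^sup>+ y. ennreal (norm (f y) powr p) \<partial>lborel) in
      if I = \<infinity> then \<infinity> else ennreal (enn2real I powr (1 / p)))"

end

theory Submission
  imports Defs
begin


definition FK :: "real \<Rightarrow> ('a::euclidean_space) set \<Rightarrow> 'a \<Rightarrow> 'a \<Rightarrow> 'a" where
  "FK \<alpha> E y z = ((indicator E z - indicator E y) / norm (z - y) powr (real DIM('a) + \<alpha> + 1)) *\<^sub>R (z - y)"

lemma fgi_FK: "frac_grad_ind \<alpha> E (y::'a::euclidean_space) = frac_mu DIM('a) \<alpha> *\<^sub>R integral\<^sup>L lborel (FK \<alpha> E y)"
  unfolding frac_grad_ind_def FK_def by simp

lemma FK_meas[measurable]:
  assumes [measurable]: "E \<in> sets borel"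
  shows "(\<lambda>(y,z). FK \<alpha> E y (z::'a::euclidean_space)) \<in> borel_measurable (lborel \<Otimes>\<^sub>M lborel)"
proof -
  have "(\<lambda>(y,z). FK \<alpha> E y (z::'a)) \<in> borel_measurable (borel \<Otimes>\<^sub>M borel)"
    unfolding FK_def by measurable
  then show ?thesis
    by (subst measurable_cong_sets[OF sets_pair_measure_cong[OF sets_lborel sets_lborel] refl])
qed

lemma FK_meas2[measurable]:
  assumes [measurable]: "E \<in> sets borel"
  shows "FK \<alpha> E (y::'a::euclidean_space) \<in> borel_measurable borel"
  unfolding FK_def by measurable

lemma fgi_meas[measurable]:
  assumes [measurable]: "E \<in> sets borel"
  shows "(frac_grad_ind \<alpha> E :: 'a::euclidean_space \<Rightarrow> 'a) \<in> borel_measurable lborel"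
proof -
  have "(\<lambda>y. integral\<^sup>L lborel (FK \<alpha> E y)) \<in> borel_measurable (lborel::'a measure)"
    by (rule lborel.borel_measurable_lebesgue_integral) (use FK_meas[OF assms] in simp)
  then show ?thesis unfolding fgi_FK by measurable
qed

lemma lborel_integral_affine:
  fixes f :: "'a::euclidean_space \<Rightarrow> 'b::{banach, second_countable_topology}"
  assumes [measurable]: "f \<in> borel_measurable borel" and c: "c \<noteq> 0"
  shows "(\<integral>x. f x \<partial>lborel) = \<bar>c\<bar>^DIM('a) *\<^sub>R (\<integral>x. f (t + c *\<^sub>R x) \<partial>lborel)"
proof -
  have "(\<integral>x. f x \<partial>lborel) = (\<integral>x. f x \<partial>(density (distr lborel borel (\<lambda>x. t + c *\<^sub>R x)) (\<lambda>_. \<bar>c\<bar>^DIM('a))))"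
    using lborel_affine[OF c, of t] by simp
  also have "\<dots> = (\<integral>x. \<bar>c\<bar>^DIM('a) *\<^sub>R f x \<partial>(distr lborel borel (\<lambda>x. t + c *\<^sub>R x)))"
    by (subst integral_density) auto
  also have "\<dots> = (\<integral>x. \<bar>c\<bar>^DIM('a) *\<^sub>R f (t + c *\<^sub>R x) \<partial>lborel)"
    by (subst integral_distr) auto
  finally show ?thesis by simp
qed

lemma lborel_nn_integral_affine:
  fixes f :: "'a::euclidean_space \<Rightarrow> ennreal"
  assumes [measurable]: "f \<in> borel_measurable borel" and c: "c \<noteq> 0"
  shows "(\<integral>\<^sup>+x. f x \<partial>lborel) = ennreal (\<bar>c\<bar>^DIM('a)) * (\<integral>\<^sup>+x. f (t + c *\<^sub>R x) \<partial>lborel)"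
proof -
  have "(\<integral>\<^sup>+x. f x \<partial>lborel) = (\<integral>\<^sup>+x. f x \<partial>(density (distr lborel borel (\<lambda>x. t + c *\<^sub>R x)) (\<lambda>_. \<bar>c\<bar>^DIM('a))))"
    using lborel_affine[OF c, of t] by simp
  also have "\<dots> = ennreal (\<bar>c\<bar>^DIM('a)) * (\<integral>\<^sup>+x. f (t + c *\<^sub>R x) \<partial>lborel)"
    by (simp add: nn_integral_density nn_integral_distr nn_integral_cmult)
  finally show ?thesis .
qed

lemma FK_scale:
  fixes x y w :: "'a::euclidean_space"
  assumes r: "r > 0"
  shows "FK \<alpha> (ball x r) y (x + r *\<^sub>R w) = r powr (- real DIM('a) - \<alpha>) *\<^sub>R FK \<alpha> (ball 0 1) ((1/r) *\<^sub>R (y - x)) w"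
proof -
  define v where "v = (1/r) *\<^sub>R (y - x)"
  have y: "y = x + r *\<^sub>R v" using r by (simp add: v_def)
  define s where "s = real DIM('a) + \<alpha> + 1"
  have i1: "indicator (ball x r) (x + r *\<^sub>R w) = (indicator (ball 0 1) w :: real)"
    using r by (auto simp: indicator_def dist_norm)
  have i2: "indicator (ball x r) y = (indicator (ball 0 1) v :: real)"
    using r by (auto simp: indicator_def dist_norm y)
  have d: "x + r *\<^sub>R w - y = r *\<^sub>R (w - v)" by (simp add: y algebra_simps)
  have n: "norm (r *\<^sub>R (w - v)) powr s = r powr s * norm (w - v) powr s"
    using r by (simp add: powr_mult)
  have "FK \<alpha> (ball x r) y (x + r *\<^sub>R w) = ((indicator (ball 0 1) w - indicator (ball 0 1) v) / (r powr s * norm (w - v) powr s)) *\<^sub>R (r *\<^sub>R (w - v))"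
    unfolding FK_def i1 i2 d s_def[symmetric] n by (rule refl)
  also have "\<dots> = ((indicator (ball 0 1) w - indicator (ball 0 1) v) / (r powr s * norm (w - v) powr s) * r) *\<^sub>R (w - v)"
    by simp
  also have "\<dots> = (r powr (1 - s)) *\<^sub>R (((indicator (ball 0 1) w - indicator (ball 0 1) v) / norm (w - v) powr s) *\<^sub>R (w - v))"
    unfolding scaleR_scaleR using r by (intro arg_cong2[where f="(*\<^sub>R)"] refl) (simp add: powr_diff field_simps)
  also have "\<dots> = (r powr (1 - s)) *\<^sub>R FK \<alpha> (ball 0 1) v w"
    by (simp add: FK_def s_def)
  also have "1 - s = - real DIM('a) - \<alpha>" by (simp add: s_def)
  finally show ?thesis unfolding v_def .
qed

lemma fgi_scale:
  fixes x y :: "'a::euclidean_space"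
  assumes r: "r > 0"
  shows "frac_grad_ind \<alpha> (ball x r) y = r powr (- \<alpha>) *\<^sub>R frac_grad_ind \<alpha> (ball 0 1) ((1/r) *\<^sub>R (y - x))"
proof -
  have "integral\<^sup>L lborel (FK \<alpha> (ball x r) y) = \<bar>r\<bar>^DIM('a) *\<^sub>R (\<integral>w. FK \<alpha> (ball x r) y (x + r *\<^sub>R w) \<partial>lborel)"
    by (rule lborel_integral_affine) (use r FK_meas2 in auto)
  also have "\<dots> = (r^DIM('a) * r powr (- real DIM('a) - \<alpha>)) *\<^sub>R integral\<^sup>L lborel (FK \<alpha> (ball 0 1) ((1/r) *\<^sub>R (y - x)))"
    using r by (simp add: FK_scale del: scaleR_scaleR) (simp only: scaleR_scaleR)
  also have "r^DIM('a) * r powr (- real DIM('a) - \<alpha>) = r powr (-\<alpha>)"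
    using r by (simp add: powr_realpow[symmetric] powr_add[symmetric])
  finally show ?thesis unfolding fgi_FK by simp
qed

lemma Lp_scale:
  fixes x :: "'a::euclidean_space"
  assumes r: "r > 0" and p: "p > 0"
  shows "(\<integral>\<^sup>+y. ennreal (norm (frac_grad_ind \<alpha> (ball x r) y) powr p) \<partial>lborel) =
    ennreal (r powr (real DIM('a) - \<alpha> * p)) * (\<integral>\<^sup>+y. ennreal (norm (frac_grad_ind \<alpha> (ball (0::'a) 1) y) powr p) \<partial>lborel)"
proof -
  have m: "(\<lambda>y. ennreal (norm (frac_grad_ind \<alpha> (ball x r) y) powr p)) \<in> borel_measurable borel"
    using fgi_meas[of "ball x r" \<alpha>] by (simp add: measurable_lborel1)
  have m0: "(\<lambda>y. ennreal (norm (frac_grad_ind \<alpha> (ball (0::'a) 1) y) powr p)) \<in> borel_measurable lborel"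
    using fgi_meas[of "ball (0::'a) 1" \<alpha>] by measurable
  have "(\<integral>\<^sup>+y. ennreal (norm (frac_grad_ind \<alpha> (ball x r) y) powr p) \<partial>lborel) =
     ennreal (\<bar>r\<bar>^DIM('a)) * (\<integral>\<^sup>+v. ennreal (norm (frac_grad_ind \<alpha> (ball x r) (x + r *\<^sub>R v)) powr p) \<partial>lborel)"
    by (rule lborel_nn_integral_affine[OF m]) (use r in auto)
  also have "(\<lambda>v. ennreal (norm (frac_grad_ind \<alpha> (ball x r) (x + r *\<^sub>R v)) powr p)) =
      (\<lambda>v. ennreal (r powr (- \<alpha> * p)) * ennreal (norm (frac_grad_ind \<alpha> (ball 0 1) v) powr p))"
  proof
    fix v
    have "frac_grad_ind \<alpha> (ball x r) (x + r *\<^sub>R v) = r powr (- \<alpha>) *\<^sub>R frac_grad_ind \<alpha> (ball 0 1) v"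
      using fgi_scale[OF r, of \<alpha> x "x + r *\<^sub>R v"] r by simp
    then have "norm (frac_grad_ind \<alpha> (ball x r) (x + r *\<^sub>R v)) powr p = r powr (- \<alpha> * p) * norm (frac_grad_ind \<alpha> (ball 0 1) v) powr p"
      using r by (simp add: powr_mult powr_powr)
    then show "ennreal (norm (frac_grad_ind \<alpha> (ball x r) (x + r *\<^sub>R v)) powr p) = ennreal (r powr (- \<alpha> * p)) * ennreal (norm (frac_grad_ind \<alpha> (ball 0 1) v) powr p)"
      by (simp add: ennreal_mult)
  qed
  also have "(\<integral>\<^sup>+v. ennreal (r powr (- \<alpha> * p)) * ennreal (norm (frac_grad_ind \<alpha> (ball (0::'a) 1) v) powr p) \<partial>lborel)
     = ennreal (r powr (- \<alpha> * p)) * (\<integral>\<^sup>+v. ennreal (norm (frac_grad_ind \<alpha> (ball (0::'a) 1) v) powr p) \<partial>lborel)"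
    by (rule nn_integral_cmult[OF m0])
  also have "ennreal (\<bar>r\<bar>^DIM('a)) * (ennreal (r powr (- \<alpha> * p)) * (\<integral>\<^sup>+v. ennreal (norm (frac_grad_ind \<alpha> (ball (0::'a) 1) v) powr p) \<partial>lborel))
     = ennreal (r^DIM('a) * r powr (- \<alpha> * p)) * (\<integral>\<^sup>+v. ennreal (norm (frac_grad_ind \<alpha> (ball (0::'a) 1) v) powr p) \<partial>lborel)"
    using r by (simp add: ennreal_mult mult.assoc)
  also have "r^DIM('a) * r powr (- \<alpha> * p) = r powr (real DIM('a) - \<alpha> * p)"
    using r by (simp add: powr_realpow[symmetric] powr_add[symmetric])
  finally show ?thesis .
qed

lemma final_assembly:
  fixes \<alpha> p :: real
  assumes p: "p > 0"
  and fin: "(\<integral>\<^sup>+y. ennreal (norm (frac_grad_ind \<alpha> (ball (0::'a::euclidean_space) 1) y) powr p) \<partial>lborel) < \<infinity>"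
  and pos: "(\<integral>\<^sup>+y. ennreal (norm (frac_grad_ind \<alpha> (ball (0::'a) 1) y) powr p) \<partial>lborel) > 0"
  shows "\<exists>c>0. \<forall>(x::'a) r. r > 0 \<longrightarrow>
           Lp_norm p (frac_grad_ind \<alpha> (ball x r)) =
             ennreal (c * r powr (real DIM('a) / p - \<alpha>))"
proof -
  define I where "I = (\<integral>\<^sup>+y. ennreal (norm (frac_grad_ind \<alpha> (ball (0::'a) 1) y) powr p) \<partial>lborel)"
  define J where "J = enn2real I"
  have IJ: "I = ennreal J" using fin by (simp add: J_def I_def less_top)
  have J: "J > 0" using pos fin IJ by (simp add: I_def)
  show ?thesis
  proof (intro exI[of _ "J powr (1/p)"] conjI allI impI)
    show "J powr (1/p) > 0" using J by simp
    fix x :: 'a and r :: real assume r: "r > 0"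
    have "(\<integral>\<^sup>+y. ennreal (norm (frac_grad_ind \<alpha> (ball x r) y) powr p) \<partial>lborel) = ennreal (r powr (real DIM('a) - \<alpha> * p)) * ennreal J"
      using Lp_scale[OF r p, of \<alpha> x] unfolding I_def[symmetric] IJ .
    also have "\<dots> = ennreal (r powr (real DIM('a) - \<alpha> * p) * J)"
      by (rule ennreal_mult[symmetric]) (use J in auto)
    finally have e: "(\<integral>\<^sup>+y. ennreal (norm (frac_grad_ind \<alpha> (ball x r) y) powr p) \<partial>lborel) = ennreal (r powr (real DIM('a) - \<alpha> * p) * J)" .
    have nn: "0 \<le> r powr (real DIM('a) - \<alpha> * p) * J" using J by simp
    have "(r powr (real DIM('a) - \<alpha> * p) * J) powr (1/p) = J powr (1/p) * r powr (real DIM('a) / p - \<alpha>)"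
    proof -
      have "(r powr (real DIM('a) - \<alpha> * p) * J) powr (1/p) = (r powr (real DIM('a) - \<alpha> * p)) powr (1/p) * J powr (1/p)"
        using J by (intro powr_mult)
      also have "(r powr (real DIM('a) - \<alpha> * p)) powr (1/p) = r powr ((real DIM('a) - \<alpha> * p) * (1/p))"
        by (rule powr_powr)
      also have "(real DIM('a) - \<alpha> * p) * (1/p) = real DIM('a) / p - \<alpha>"
        using p by (simp add: field_simps)
      finally show ?thesis by (simp only: mult.commute)
    qed
    then show "Lp_norm p (frac_grad_ind \<alpha> (ball x r)) = ennreal (J powr (1/p) * r powr (real DIM('a) / p - \<alpha>))"
      unfolding Lp_norm_def Let_def e using nn by (simp only: enn2real_ennreal ennreal_neq_top if_False) simp
  qed
qed



lemma frac_mu_pos: "0 < \<alpha> \<Longrightarrow> \<alpha> < 1 \<Longrightarrow> frac_mu n \<alpha> > 0"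
  unfolding frac_mu_def by (intro divide_pos_pos mult_pos_pos) auto

lemma AE_not_in_ball:
  assumes "AE x in lborel. x \<notin> ball (c::'a::euclidean_space) r" "r > 0"
  shows False
proof -
  have "emeasure lborel {x\<in>space lborel. x \<in> ball c r} = 0"
    by (rule emeasure_eq_0_AE) (use assms(1) in simp)
  then have "emeasure lborel (ball c r) = 0" by (simp add: ball_def)
  moreover have "emeasure lborel (ball c r) = ennreal (unit_ball_vol (DIM('a)) * r ^ DIM('a))"
    using assms(2) by (intro emeasure_ball) simp
  moreover have "unit_ball_vol (DIM('a)) * r ^ DIM('a) > 0" using assms(2) by simp
  ultimately show False using assms(2) by simp
qed

lemma g_nonzero:
  fixes y :: "'a::euclidean_space"
  assumes a: "0 < \<alpha>" "\<alpha> < 1" and y: "norm y > 1"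
  shows "frac_grad_ind \<alpha> (ball 0 1) y \<noteq> 0"
proof -
  define s where "s = real DIM('a) + \<alpha> + 1"
  have s0: "s \<ge> 0" using a by (simp add: s_def)
  define B :: "'a set" where "B = ball 0 1"
  define f where "f = FK \<alpha> B y"
  have yB: "y \<notin> B" using y by (simp add: B_def)
  have f: "f z = (indicator B z / norm (z - y) powr s) *\<^sub>R (z - y)" for z
    using yB by (simp add: f_def FK_def s_def)
  have fm[measurable]: "f \<in> borel_measurable lborel"
    unfolding f_def B_def measurable_lborel2 by (rule FK_meas2) simp
  define d where "d = norm y - 1"
  have d: "d > 0" using y by (simp add: d_def)
  have zy: "norm (z - y) \<ge> d" if "z \<in> B" for z
    using that norm_triangle_ineq2[of y z] by (auto simp: B_def d_def norm_minus_commute)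
  have bnd: "norm (f z) \<le> norm (indicator B z * ((norm y + 1) / d powr s))" for z
  proof (cases "z \<in> B")
    case True
    have zy': "norm (z - y) > 0" using zy[OF True] d by linarith
    have "norm (f z) = norm (z - y) / norm (z - y) powr s" using True by (simp add: f)
    also have "\<dots> \<le> (norm y + 1) / d powr s"
    proof (rule frac_le)
      show "norm (z - y) \<le> norm y + 1" using True norm_triangle_ineq4[of z y] by (auto simp: B_def)
      show "d powr s \<le> norm (z - y) powr s" using zy[OF True] d s0 by (intro powr_mono2) auto
    qed (use d in auto)
    finally show ?thesis using True d by simp
  qed (simp add: f)
  have int: "integrable lborel f"
  proof (rule Bochner_Integration.integrable_bound[OF _ fm])
    show "AE x in lborel. norm (f x) \<le> norm (indicator B x * ((norm y + 1) / d powr s))"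
      using bnd by simp
    show "integrable lborel (\<lambda>x. indicator B x * ((norm y + 1) / d powr s))"
      by (rule integrable_mult_left) (auto simp: B_def intro!: emeasure_lborel_ball_finite)
  qed
  have pos: "- (y \<bullet> f z) > 0" if "z \<in> B" for z
  proof -
    have zy': "norm (z - y) > 0" using zy[OF that] d by linarith
    have "y \<bullet> z \<le> norm y * norm z" by (rule norm_cauchy_schwarz)
    also have "\<dots> < norm y * 1" using that y by (intro mult_strict_left_mono) (auto simp: B_def)
    also have "\<dots> < norm y * norm y" using y by (intro mult_strict_left_mono) auto
    finally have "y \<bullet> (z - y) < 0" by (simp add: inner_diff_right power2_norm_eq_inner[symmetric] power2_eq_square)
    then show ?thesis using that zy' by (simp add: f divide_neg_pos)
  qed
  have nn: "AE z in lborel. 0 \<le> - (y \<bullet> f z)"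
  proof (rule AE_I2)
    fix z show "0 \<le> - (y \<bullet> f z)" using pos[of z] by (cases "z \<in> B") (auto simp: f)
  qed
  have intn: "integrable lborel (\<lambda>z. - (y \<bullet> f z))" using int by auto
  have "(\<integral>z. - (y \<bullet> f z) \<partial>lborel) \<noteq> 0"
  proof
    assume "(\<integral>z. - (y \<bullet> f z) \<partial>lborel) = 0"
    then have "AE z in lborel. - (y \<bullet> f z) = 0"
      using integral_nonneg_eq_0_iff_AE[OF intn nn] by simp
    then have "AE z in lborel. z \<notin> ball (0::'a) 1"
      by (rule eventually_mono) (use pos in \<open>force simp: B_def\<close>)
    then show False by (rule AE_not_in_ball) simp
  qed
  then have "y \<bullet> integral\<^sup>L lborel f \<noteq> 0" using int by simp
  then have "integral\<^sup>L lborel f \<noteq> 0" by auto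
  then show ?thesis using frac_mu_pos[OF a, of "DIM('a)"] by (simp add: fgi_FK f_def B_def)
qed

lemma I_pos:
  assumes a: "0 < \<alpha>" "\<alpha> < 1"
  shows "(\<integral>\<^sup>+y. ennreal (norm (frac_grad_ind \<alpha> (ball (0::'a::euclidean_space) 1) y) powr p) \<partial>lborel) > 0"
proof (rule ccontr)
  assume "\<not> ?thesis"
  then have "(\<integral>\<^sup>+y. ennreal (norm (frac_grad_ind \<alpha> (ball (0::'a::euclidean_space) 1) y) powr p) \<partial>lborel) = 0"
    by (simp add: zero_less_iff_neq_zero)
  then have "AE y in lborel. ennreal (norm (frac_grad_ind \<alpha> (ball (0::'a::euclidean_space) 1) y) powr p) = 0"
    by (subst (asm) nn_integral_0_iff_AE) (use fgi_meas[of "ball (0::'a) 1" \<alpha>] in auto)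
  then have "AE y in lborel. y \<notin> ball (3 *\<^sub>R (SOME b. b \<in> (Basis::'a set))) 1"
  proof eventually_elim
    case (elim y)
    show ?case
    proof
      assume yb: "y \<in> ball (3 *\<^sub>R (SOME b. b \<in> (Basis::'a set))) 1"
      have "(SOME b. b \<in> (Basis::'a set)) \<in> Basis" by (rule someI_ex) (use nonempty_Basis in blast)
      then have nb: "norm (SOME b. b \<in> (Basis::'a set)) = 1" by simp
      have "norm y \<ge> 3 - 1" using yb norm_triangle_ineq2[of "3 *\<^sub>R (SOME b. b \<in> (Basis::'a set))" y] nb
        by (auto simp: dist_norm)
      then have "frac_grad_ind \<alpha> (ball 0 1) y \<noteq> 0" by (intro g_nonzero a) auto
      then show False using elim by simp
    qed
  qed
  then show False by (rule AE_not_in_ball) simp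
qed



lemma dyadic_aux: "1 \<le> (x::real) \<Longrightarrow> x < 2^N \<Longrightarrow> \<exists>k::nat. 2^k \<le> x \<and> x < 2^(k+1)"
proof (induction N)
  case 0 then show ?case by simp
next
  case (Suc N)
  show ?case
  proof (cases "x < 2^N")
    case True then show ?thesis using Suc by blast
  next
    case False then show ?thesis using Suc by (intro exI[of _ N]) auto
  qed
qed

lemma dyadic: "1 \<le> (x::real) \<Longrightarrow> \<exists>k::nat. 2^k \<le> x \<and> x < 2^(k+1)"
  using real_arch_pow[of 2 x] dyadic_aux by auto

lemma ennreal_le_suminf: "f k \<le> (\<Sum>i. f i :: ennreal)"
  using ennreal_suminf_lessD[of f "f k"] by (metis ennreal_suminf_cmult le_less_linear less_irrefl summableI sum_le_suminf[of f "{k}"] finite.intros zero_le sum.insert sum.empty add_0_right insert_absorb insertI1 insert_not_empty empty_iff) 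

lemma pw1: fixes x a :: real assumes "x > 0" shows "(2^k * x) powr a = (2 powr a)^k * x powr a"
proof -
  have e: "(2::real)^k = 2 powr (real k)" by (simp add: powr_realpow)
  have "(2^k * x) powr a = (2^k) powr a * x powr a" using assms by (simp add: powr_mult)
  also note e
  also have "(2 powr (real k)) powr a = 2 powr (real k * a)" by (rule powr_powr)
  also have "\<dots> = (2 powr a)^k" by (rule powr_power[symmetric]) simp
  finally show ?thesis unfolding e .
qed
lemma pw2: fixes x s :: real assumes "x > 0" shows "x powr (-s) * x^n = x powr (real n - s)"
  using assms by (simp add: powr_diff powr_minus powr_realpow divide_inverse mult.commute)
lemma pw3: fixes s :: real shows "2 powr (-s) * 2^n = 2 powr (real n - s)"
  using pw2[of 2 s n] by simp
lemma pw4: fixes d :: real shows "(2^(k+1)*d)^N = 2^N * (2^N)^k * d^N"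
  by (simp add: power_mult_distrib power_mult[symmetric] mult.commute)
lemma pw5: fixes d s V :: real assumes "d > 0"
  shows "(2^k * d) powr (-s) * (V * (2^(k+1) * d) ^ N) = V * 2^N * d powr (real N - s) * (2 powr (real N - s))^k"
proof -
  have "(2^k * d) powr (-s) * (V * (2^(k+1) * d) ^ N) = ((2 powr (-s))^k * d powr (-s)) * (V * (2^N * (2^N)^k * d^N))"
    unfolding pw1[OF assms] pw4 ..
  also have "\<dots> = V * 2^N * (d powr (-s) * d^N) * (2 powr (-s) * 2^N)^k"
    by (simp add: power_mult_distrib algebra_simps)
  also have "\<dots> = V * 2^N * d powr (real N - s) * (2 powr (real N - s))^k"
    unfolding pw2[OF assms] pw3 ..
  finally show ?thesis .
qed

lemma geom_ennreal:
  assumes "0 \<le> c" "0 \<le> q" "q < 1"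
  shows "(\<Sum>k. ennreal (c * q^k)) = ennreal (c / (1 - q))"
proof (rule suminf_ennreal_eq)
  show "0 \<le> c * q^k" for k using assms by simp
  have "(\<lambda>k. q^k) sums (1 / (1 - q))" using assms by (intro geometric_sums) simp
  then show "(\<lambda>k. c * q^k) sums (c / (1 - q))" using sums_mult[of _ "1/(1-q)" c] by simp
qed

lemma tail_bound:
  fixes s d :: real
  assumes s: "s > real DIM('a)" and d: "d > 0"
  shows "(\<integral>\<^sup>+w. indicator {w::'a::euclidean_space. d \<le> norm w} w * ennreal (norm w powr (-s)) \<partial>lborel)
     \<le> ennreal (unit_ball_vol (real DIM('a)) * 2^DIM('a) * d powr (real DIM('a) - s) / (1 - 2 powr (real DIM('a) - s)))"
proof -
  define n where "n = real DIM('a)"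
  define V where "V = unit_ball_vol n"
  define q where "q = 2 powr (n - s)"
  have q: "0 \<le> q" "q < 1" using s powr_less_mono[of "n - s" 0 2] by (auto simp: q_def n_def)
  define f where "f k w = ennreal ((2^k * d) powr (-s)) * indicator (ball (0::'a) (2^(k+1) * d)) w" for k w
  have pw: "indicator {w::'a. d \<le> norm w} w * ennreal (norm w powr (-s)) \<le> (\<Sum>k. f k w)" for w
  proof (cases "d \<le> norm w")
    case True
    then obtain k :: nat where k: "2^k \<le> norm w / d" "norm w / d < 2^(k+1)"
      using dyadic[of "norm w / d"] d by auto
    have k': "2^k * d \<le> norm w" "norm w < 2^(k+1) * d" using k d by (auto simp: field_simps)
    have "norm w powr (-s) \<le> (2^k * d) powr (-s)"
      using k'(1) d s by (intro powr_mono2') (auto simp: n_def)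
    moreover have "w \<in> ball 0 (2^(k+1) * d)" using k'(2) by simp
    ultimately have "indicator {w::'a. d \<le> norm w} w * ennreal (norm w powr (-s)) \<le> f k w"
      using True by (simp add: f_def)
    also have "\<dots> \<le> (\<Sum>k. f k w)" by (rule ennreal_le_suminf)
    finally show ?thesis .
  qed simp
  have fm: "(\<lambda>w. f k w) \<in> borel_measurable lborel" for k
    unfolding f_def by (intro borel_measurable_times_ennreal borel_measurable_indicator) auto
  have fk: "(\<integral>\<^sup>+w. f k w \<partial>lborel) = ennreal (V * 2^DIM('a) * d powr (n - s) * q^k)" for k
  proof -
    have "(\<integral>\<^sup>+w. f k w \<partial>lborel) = ennreal ((2^k * d) powr (-s)) * emeasure lborel (ball (0::'a) (2^(k+1) * d))"
      unfolding f_def by (rule nn_integral_cmult_indicator) simp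
    also have "emeasure lborel (ball (0::'a) (2^(k+1) * d)) = ennreal (V * (2^(k+1) * d) ^ DIM('a))"
      using d by (simp add: emeasure_ball V_def n_def)
    also have "ennreal ((2^k * d) powr (-s)) * ennreal (V * (2^(k+1) * d) ^ DIM('a)) = ennreal ((2^k * d) powr (-s) * (V * (2^(k+1) * d) ^ DIM('a)))"
      using d by (intro ennreal_mult[symmetric]) (auto simp: V_def n_def intro!: mult_nonneg_nonneg less_imp_le[OF unit_ball_vol_pos])
    also have "(2^k * d) powr (-s) * (V * (2^(k+1) * d) ^ DIM('a)) = V * 2^DIM('a) * d powr (n - s) * q^k"
      unfolding pw5[OF d] q_def n_def ..
    finally show ?thesis .
  qed
  have "(\<integral>\<^sup>+w. indicator {w::'a. d \<le> norm w} w * ennreal (norm w powr (-s)) \<partial>lborel) \<le> (\<integral>\<^sup>+w. (\<Sum>k. f k w) \<partial>lborel)"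
    by (intro nn_integral_mono pw)
  also have "\<dots> = (\<Sum>k. \<integral>\<^sup>+w. f k w \<partial>lborel)"
    by (rule nn_integral_suminf) (rule fm)
  also have "\<dots> = (\<Sum>k. ennreal (V * 2^DIM('a) * d powr (n - s) * q^k))" by (simp add: fk)
  also have "\<dots> = ennreal (V * 2^DIM('a) * d powr (n - s) / (1 - q))"
    by (rule geom_ennreal) (use q in \<open>auto simp: V_def n_def\<close>)
  finally show ?thesis by (simp add: V_def n_def q_def)
qed

lemma pow_diff_le: "0 \<le> b \<Longrightarrow> b \<le> (a::real) \<Longrightarrow> a^n - b^n \<le> real n * a^(n-1) * (a - b)"
proof (induction n)
  case 0 then show ?case by simp
next
  case (Suc n)
  have ab: "b^n \<le> a^n" using Suc.prems by (intro power_mono) auto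
  have "a^(Suc n) - b^(Suc n) = a * (a^n - b^n) + b^n * (a - b)" by (simp add: algebra_simps)
  also have "\<dots> \<le> a * (real n * a^(n-1) * (a - b)) + a^n * (a - b)"
    using Suc ab by (intro add_mono mult_left_mono mult_right_mono) auto
  also have "\<dots> = real (Suc n) * a^(Suc n - 1) * (a - b)"
    by (cases n) (simp_all add: algebra_simps)
  finally show ?case .
qed

lemma shell_measure:
  fixes e :: real
  assumes e: "0 < e" "e \<le> 1"
  shows "emeasure lborel {y::'a::euclidean_space. \<bar>norm y - 1\<bar> \<le> e} \<le> ennreal (unit_ball_vol (real DIM('a)) * real DIM('a) * 2^DIM('a) * e)"
proof -
  define N where "N = DIM('a)"
  define V where "V = unit_ball_vol (real DIM('a))"
  have V: "V > 0" by (simp add: V_def)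
  have "{y::'a. \<bar>norm y - 1\<bar> \<le> e} \<subseteq> cball 0 (1 + e) - ball 0 (1 - e)" by auto
  then have "emeasure lborel {y::'a. \<bar>norm y - 1\<bar> \<le> e} \<le> emeasure lborel (cball (0::'a) (1 + e) - ball 0 (1 - e))"
    by (intro emeasure_mono) auto
  also have "\<dots> = emeasure lborel (cball (0::'a) (1 + e)) - emeasure lborel (ball (0::'a) (1 - e))"
    using e emeasure_lborel_ball_finite[of "0::'a" "1 - e"] by (intro emeasure_Diff) auto
  also have "\<dots> = ennreal (V * (1 + e)^N) - ennreal (V * (1 - e)^N)"
    using e by (simp add: emeasure_ball emeasure_cball V_def N_def)
  also have "\<dots> = ennreal (V * ((1 + e)^N - (1 - e)^N))"
    using e V by (simp add: ennreal_minus right_diff_distrib)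
  also have "\<dots> \<le> ennreal (V * real N * 2^N * e)"
  proof (rule ennreal_leI)
    have "(1 + e)^N - (1 - e)^N \<le> real N * (1 + e)^(N-1) * ((1 + e) - (1 - e))"
      using e by (intro pow_diff_le) auto
    also have "\<dots> \<le> real N * 2^(N-1) * (2 * e)"
    proof -
      have "(1 + e)^(N-1) \<le> 2^(N-1)" using e by (intro power_mono) auto
      then have "real N * (1 + e)^(N-1) \<le> real N * 2^(N-1)" by (intro mult_left_mono) auto
      moreover have "(1 + e) - (1 - e) = 2 * e" by simp
      ultimately show ?thesis using e by (simp only:) (intro mult_right_mono, auto)
    qed
    also have "\<dots> \<le> real N * 2^N * e"
      by (cases N) (simp_all add: algebra_simps)
    finally show "V * ((1 + e)^N - (1 - e)^N) \<le> V * real N * 2^N * e"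
      using V by (simp add: mult.assoc mult_left_mono)
  qed
  finally show ?thesis by (simp add: V_def N_def)
qed

lemma ck_ident: fixes q :: real
  shows "((1/2::real)^(k+1)) powr (-q) * (1/2)^k = 2 powr q * (2 powr q / 2)^k"
proof -
  have h: "(1/2::real)^(k+1) = 2 powr (- real (k+1))"
  proof -
    have "(2::real) powr real (k+1) = 2^(k+1)" by (rule powr_realpow) simp
    then have "2 powr (- real (k+1)) = 1 / (2::real)^(k+1)" by (metis powr_minus_divide)
    then show ?thesis by (simp add: power_one_over)
  qed
  have "((1/2::real)^(k+1)) powr (-q) = 2 powr (real (k+1) * q)"
    unfolding h powr_powr by (simp add: algebra_simps)
  also have "\<dots> = 2 powr q * (2 powr q)^k"
    by (simp add: powr_power powr_add[symmetric] algebra_simps)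
  finally have "((1/2::real)^(k+1)) powr (-q) * (1/2)^k = 2 powr q * ((2 powr q)^k * (1/2)^k)" by simp
  also have "(2 powr q)^k * (1/2::real)^k = (2 powr q / 2)^k"
    by (simp add: power_mult_distrib[symmetric])
  finally show ?thesis .
qed

lemma near_bound:
  fixes q :: real
  assumes q: "0 \<le> q" "q < 1"
  shows "(\<integral>\<^sup>+y. indicator (ball (0::'a::euclidean_space) 2) y * ennreal (\<bar>norm y - 1\<bar> powr (-q)) \<partial>lborel) < \<infinity>"
proof -
  define A where "A k = {y::'a. \<bar>norm y - 1\<bar> \<le> (1/2)^k}" for k :: nat
  define c where "c k = ((1/2::real)^(k+1)) powr (-q)" for k :: nat
  define V where "V = unit_ball_vol (real DIM('a))"
  define K where "K = V * real DIM('a) * 2^DIM('a) * 2 powr q"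
  define r where "r = 2 powr q / 2"
  have V: "V > 0" by (simp add: V_def)
  have r: "0 \<le> r" "r < 1"
  proof -
    show "0 \<le> r" by (simp add: r_def)
    have "2 powr q < 2 powr 1" using q by (intro powr_less_mono) auto
    then show "r < 1" by (simp add: r_def)
  qed
  have K: "0 \<le> K" using V by (simp add: K_def)
  have Am[measurable]: "A k \<in> sets lborel" for k
    unfolding A_def by measurable
  have pw: "indicator (ball (0::'a) 2) y * ennreal (\<bar>norm y - 1\<bar> powr (-q))
      \<le> indicator (ball (0::'a) 2) y + (\<Sum>k. ennreal (c k) * indicator (A k) y)" for y
  proof (cases "y \<in> ball 0 2")
    case False then show ?thesis by simp
  next
    case True
    define t where "t = \<bar>norm y - 1\<bar>"
    have t0: "t \<ge> 0" by (simp add: t_def)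
    consider "t = 0" | "t \<ge> 1" | "0 < t \<and> t < 1" using t0 by linarith
    then show ?thesis
    proof cases
      case 1 then show ?thesis by (simp add: t_def[symmetric])
    next
      case 2
      have "t powr (-q) \<le> 1 powr (-q)" using 2 q by (intro powr_mono2') auto
      then have "ennreal (t powr (-q)) \<le> 1" by simp
      then show ?thesis using True by (simp add: t_def[symmetric] add_increasing2)
    next
      case 3
      then obtain k :: nat where k: "2^k \<le> 1/t" "1/t < 2^(k+1)"
        using dyadic[of "1/t"] by auto
      have tk: "t \<le> (1/2)^k" using k(1) 3 by (simp add: field_simps power_one_over)
      have tk1: "(1/2)^(k+1) \<le> t" using k(2) 3 by (simp add: field_simps power_one_over)
      have "t powr (-q) \<le> c k"
        unfolding c_def using tk1 q by (intro powr_mono2') auto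
      then have "ennreal (t powr (-q)) \<le> ennreal (c k) * indicator (A k) y"
        using tk by (simp add: A_def t_def[symmetric] ennreal_leI)
      also have "\<dots> \<le> (\<Sum>k. ennreal (c k) * indicator (A k) y)" by (rule ennreal_le_suminf)
      finally show ?thesis using True by (simp add: t_def[symmetric] add_increasing)
    qed
  qed
  have "(\<integral>\<^sup>+y. indicator (ball (0::'a) 2) y * ennreal (\<bar>norm y - 1\<bar> powr (-q)) \<partial>lborel)
      \<le> (\<integral>\<^sup>+y. indicator (ball (0::'a) 2) y + (\<Sum>k. ennreal (c k) * indicator (A k) y) \<partial>lborel)"
    by (intro nn_integral_mono pw)
  also have "\<dots> = emeasure lborel (ball (0::'a) 2) + (\<Sum>k. ennreal (c k) * emeasure lborel (A k))"
  proof -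
    have m: "(\<lambda>y. ennreal (c k) * indicator (A k) y) \<in> borel_measurable lborel" for k
      by (intro borel_measurable_times_ennreal borel_measurable_indicator) (use Am in auto)
    have "(\<integral>\<^sup>+y. indicator (ball (0::'a) 2) y + (\<Sum>k. ennreal (c k) * indicator (A k) y) \<partial>lborel)
        = (\<integral>\<^sup>+y. indicator (ball (0::'a) 2) y \<partial>lborel) + (\<integral>\<^sup>+y. (\<Sum>k. ennreal (c k) * indicator (A k) y) \<partial>lborel)"
      by (rule nn_integral_add) (auto intro!: borel_measurable_suminf m borel_measurable_indicator)
    also have "(\<integral>\<^sup>+y. (\<Sum>k. ennreal (c k) * indicator (A k) y) \<partial>lborel) = (\<Sum>k. \<integral>\<^sup>+y. ennreal (c k) * indicator (A k) y \<partial>lborel)"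
      by (rule nn_integral_suminf) (rule m)
    also have "\<dots> = (\<Sum>k. ennreal (c k) * emeasure lborel (A k))"
      by (intro suminf_cong nn_integral_cmult_indicator Am)
    finally show ?thesis by simp
  qed
  also have "(\<Sum>k. ennreal (c k) * emeasure lborel (A k)) \<le> (\<Sum>k. ennreal (K * r^k))"
  proof (rule suminf_le)
    fix k
    have "emeasure lborel (A k) \<le> ennreal (V * real DIM('a) * 2^DIM('a) * (1/2)^k)"
      unfolding A_def V_def by (rule shell_measure) (auto simp: power_le_one)
    then have "ennreal (c k) * emeasure lborel (A k) \<le> ennreal (c k) * ennreal (V * real DIM('a) * 2^DIM('a) * (1/2)^k)"
      by (rule mult_left_mono) simp
    also have "\<dots> = ennreal (c k * (V * real DIM('a) * 2^DIM('a) * (1/2)^k))"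
      using V by (intro ennreal_mult[symmetric]) (auto simp: c_def)
    also have "c k * (V * real DIM('a) * 2^DIM('a) * (1/2)^k) = V * real DIM('a) * 2^DIM('a) * (c k * (1/2)^k)"
      by (simp only: ac_simps)
    also have "c k * (1/2)^k = 2 powr q * r^k" unfolding c_def r_def by (rule ck_ident)
    also have "V * real DIM('a) * 2^DIM('a) * (2 powr q * r^k) = K * r^k" by (simp add: K_def)
    finally show "ennreal (c k) * emeasure lborel (A k) \<le> ennreal (K * r^k)" .
  qed simp_all
  also have "(\<Sum>k. ennreal (K * r^k)) = ennreal (K / (1 - r))"
    by (rule geom_ennreal) (use K r in auto)
  finally have "(\<integral>\<^sup>+y. indicator (ball (0::'a) 2) y * ennreal (\<bar>norm y - 1\<bar> powr (-q)) \<partial>lborel)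
     \<le> emeasure lborel (ball (0::'a) 2) + ennreal (K / (1 - r))" by - (simp add: add_left_mono)
  also have "\<dots> < \<infinity>" using emeasure_lborel_ball_finite[of "0::'a" 2] by simp
  finally show ?thesis .
qed



lemma FK_norm:
  fixes y z :: "'a::euclidean_space"
  shows "norm (FK \<alpha> E y z) = \<bar>indicator E z - indicator E y\<bar> * norm (z - y) powr (- (real DIM('a) + \<alpha>))"
proof (cases "z = y")
  case True then show ?thesis by (simp add: FK_def)
next
  case False
  define s where "s = real DIM('a) + \<alpha> + 1"
  have nz: "norm (z - y) > 0" using False by simp
  have "norm (FK \<alpha> E y z) = \<bar>indicator E z - indicator E y\<bar> * (norm (z - y) / norm (z - y) powr s)"
    by (simp add: FK_def s_def abs_mult)
  also have "norm (z - y) / norm (z - y) powr s = norm (z - y) powr (1 - s)"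
    using nz by (simp add: powr_diff)
  also have "1 - s = - (real DIM('a) + \<alpha>)" by (simp add: s_def)
  finally show ?thesis .
qed

lemma g_bound_nn:
  fixes y :: "'a::euclidean_space"
  assumes "0 < \<alpha>" "\<alpha> < 1"
  shows "ennreal (norm (frac_grad_ind \<alpha> E y)) \<le> ennreal (frac_mu DIM('a) \<alpha>) * (\<integral>\<^sup>+z. ennreal (norm (FK \<alpha> E y z)) \<partial>lborel)"
proof (cases "integrable lborel (FK \<alpha> E y)")
  case True
  have mu: "frac_mu DIM('a) \<alpha> > 0" using frac_mu_pos assms by blast
  have "ennreal (norm (frac_grad_ind \<alpha> E y)) = ennreal (frac_mu DIM('a) \<alpha>) * ennreal (norm (integral\<^sup>L lborel (FK \<alpha> E y)))"
    using mu by (simp add: fgi_FK ennreal_mult)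
  also have "\<dots> \<le> ennreal (frac_mu DIM('a) \<alpha>) * (\<integral>\<^sup>+z. ennreal (norm (FK \<alpha> E y z)) \<partial>lborel)"
    by (intro mult_left_mono integral_norm_bound_ennreal True) simp
  finally show ?thesis .
next
  case False
  then show ?thesis by (simp add: fgi_FK not_integrable_integral_eq)
qed

lemma FK_int_near:
  fixes y :: "'a::euclidean_space"
  assumes a: "0 < \<alpha>" and y: "norm y \<noteq> 1"
  shows "(\<integral>\<^sup>+z. ennreal (norm (FK \<alpha> (ball 0 1) y z)) \<partial>lborel)
    \<le> ennreal (unit_ball_vol (real DIM('a)) * 2^DIM('a) / (1 - 2 powr (- \<alpha>)) * \<bar>norm y - 1\<bar> powr (- \<alpha>))"
proof -
  define t where "t = \<bar>norm y - 1\<bar>"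
  have t: "t > 0" using y by (simp add: t_def)
  define h where "h w = indicator {w::'a. t \<le> norm w} w * ennreal (norm w powr (- (real DIM('a) + \<alpha>)))" for w
  have hm: "h \<in> borel_measurable borel" unfolding h_def by measurable
  have pw: "ennreal (norm (FK \<alpha> (ball 0 1) y z)) \<le> h (z - y)" for z
  proof (cases "indicator (ball (0::'a) 1) z = (indicator (ball 0 1) y :: real)")
    case True then show ?thesis by (simp add: FK_norm)
  next
    case False
    have "t \<le> norm (z - y)"
    proof (cases "norm y < 1")
      case True
      with False have "norm z \<ge> 1" by (auto simp: indicator_def split: if_splits)
      then show ?thesis using True norm_triangle_ineq2[of z y] by (simp add: t_def)
    next
      case False': False
      with y have "norm y > 1" by simp
      with False have "norm z < 1" by (auto simp: indicator_def split: if_splits)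
      then show ?thesis using \<open>norm y > 1\<close> norm_triangle_ineq2[of y z] by (simp add: t_def norm_minus_commute)
    qed
    moreover have "\<bar>indicator (ball (0::'a) 1) z - indicator (ball 0 1) y\<bar> \<le> (1::real)"
      by (simp add: indicator_def)
    ultimately show ?thesis
      by (auto simp: FK_norm h_def intro!: ennreal_leI mult_left_le_one_le)
  qed
  have "(\<integral>\<^sup>+z. ennreal (norm (FK \<alpha> (ball 0 1) y z)) \<partial>lborel) \<le> (\<integral>\<^sup>+z. h (z - y) \<partial>lborel)"
    by (intro nn_integral_mono pw)
  also have "(\<integral>\<^sup>+z. h (z - y) \<partial>lborel) = ennreal (\<bar>1\<bar>^DIM('a)) * (\<integral>\<^sup>+w. h (y + 1 *\<^sub>R w - y) \<partial>lborel)"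
    by (rule lborel_nn_integral_affine) (use hm in auto)
  also have "\<dots> = (\<integral>\<^sup>+w. h w \<partial>lborel)" by simp
  also have "\<dots> \<le> ennreal (unit_ball_vol (real DIM('a)) * 2^DIM('a) * t powr (real DIM('a) - (real DIM('a) + \<alpha>)) / (1 - 2 powr (real DIM('a) - (real DIM('a) + \<alpha>))))"
    unfolding h_def by (rule tail_bound) (use a t in auto)
  finally show ?thesis by (simp add: t_def)
qed

lemma FK_int_far:
  fixes y :: "'a::euclidean_space"
  assumes a: "0 < \<alpha>" and y: "norm y \<ge> 2"
  shows "(\<integral>\<^sup>+z. ennreal (norm (FK \<alpha> (ball 0 1) y z)) \<partial>lborel)
    \<le> ennreal (unit_ball_vol (real DIM('a)) * (norm y / 2) powr (- (real DIM('a) + \<alpha>)))"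
proof -
  define c where "c = (norm y / 2) powr (- (real DIM('a) + \<alpha>))"
  have pw: "ennreal (norm (FK \<alpha> (ball 0 1) y z)) \<le> ennreal c * indicator (ball (0::'a) 1) z" for z
  proof (cases "z \<in> ball 0 1")
    case True
    have "norm y / 2 \<le> norm (z - y)" using True y norm_triangle_ineq2[of y z] by (simp add: norm_minus_commute)
    then have "norm (z - y) powr (- (real DIM('a) + \<alpha>)) \<le> c"
      unfolding c_def using y a by (intro powr_mono2') auto
    then show ?thesis using True y by (simp add: FK_norm indicator_def ennreal_leI)
  next
    case False then show ?thesis using y by (simp add: FK_norm indicator_def)
  qed
  have "(\<integral>\<^sup>+z. ennreal (norm (FK \<alpha> (ball 0 1) y z)) \<partial>lborel) \<le> (\<integral>\<^sup>+z. ennreal c * indicator (ball (0::'a) 1) z \<partial>lborel)"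
    by (intro nn_integral_mono pw)
  also have "\<dots> = ennreal c * emeasure lborel (ball (0::'a) 1)"
    by (rule nn_integral_cmult_indicator) simp
  also have "\<dots> = ennreal (unit_ball_vol (real DIM('a)) * c)"
    by (simp add: emeasure_ball ennreal_mult' mult.commute c_def)
  finally show ?thesis by (simp add: c_def)
qed

lemma l146: fixes mu Ct t al p :: real assumes "mu > 0" "Ct > 0" "t \<ge> 0"
  shows "(mu * Ct * t powr (- al)) powr p = (mu * Ct) powr p * t powr (- (al * p))"
proof -
  have "(mu * Ct * t powr (- al)) powr p = (mu * Ct) powr p * (t powr (- al)) powr p"
    using assms by (intro powr_mult)
  also have "(t powr (- al)) powr p = t powr (- (al * p))" by (simp add: powr_powr)
  finally show ?thesis .
qed
lemma l166: fixes x S :: real assumes "x \<ge> 0"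
  shows "(x / 2) powr (- S) = x powr (- S) * 2 powr S"
proof -
  have "(x / 2) powr (- S) = x powr (- S) / 2 powr (- S)" using assms by (intro powr_divide)
  also have "\<dots> = x powr (- S) * 2 powr S" by (simp add: powr_minus divide_inverse)
  finally show ?thesis .
qed
lemma l167: fixes a b c d :: real shows "a * (b * c) = (a * c) * b"
  by (simp only: mult.assoc mult.commute mult.left_commute)

lemma I_fin:
  fixes \<alpha> p :: real
  assumes a: "0 < \<alpha>" "\<alpha> < 1" and p: "1 \<le> p" "p < 1 / \<alpha>"
  shows "(\<integral>\<^sup>+y. ennreal (norm (frac_grad_ind \<alpha> (ball (0::'a::euclidean_space) 1) y) powr p) \<partial>lborel) < \<infinity>"
proof -
  define g where "g = frac_grad_ind \<alpha> (ball (0::'a) 1)"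
  define N where "N = real DIM('a)"
  define mu where "mu = frac_mu DIM('a) \<alpha>"
  define V where "V = unit_ball_vol N"
  define Ct where "Ct = V * 2^DIM('a) / (1 - 2 powr (- \<alpha>))"
  define q where "q = \<alpha> * p"
  define S where "S = (N + \<alpha>) * p"
  define C1 where "C1 = (mu * Ct) powr p"
  define C2 where "C2 = (mu * V) powr p * 2 powr S"
  have mu: "mu > 0" unfolding mu_def using frac_mu_pos a by blast
  have V: "V > 0" by (simp add: V_def N_def)
  have two: "2 powr (- \<alpha>) < 1" using a powr_less_mono[of "- \<alpha>" 0 2] by simp
  have Ct: "Ct > 0" using V two by (simp add: Ct_def)
  have q: "0 \<le> q" "q < 1"
  proof -
    show "0 \<le> q" using a p by (simp add: q_def)
    have "\<alpha> * p < \<alpha> * (1 / \<alpha>)" using a p by (intro mult_strict_left_mono) auto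
    then show "q < 1" using a by (simp add: q_def)
  qed
  have S: "S > N"
  proof -
    have "N + \<alpha> \<le> (N + \<alpha>) * p" using p a by (simp add: N_def)
    then show ?thesis using a by (simp add: S_def)
  qed
  have near: "norm (g y) powr p \<le> C1 * \<bar>norm y - 1\<bar> powr (- q)" if y: "norm y \<noteq> 1" for y :: 'a
  proof -
    have "ennreal (norm (g y)) \<le> ennreal mu * (\<integral>\<^sup>+z. ennreal (norm (FK \<alpha> (ball 0 1) y z)) \<partial>lborel)"
      unfolding g_def mu_def by (rule g_bound_nn[OF a])
    also have "\<dots> \<le> ennreal mu * ennreal (Ct * \<bar>norm y - 1\<bar> powr (- \<alpha>))"
      unfolding Ct_def V_def N_def by (rule mult_left_mono[OF FK_int_near[OF a(1) y]]) simp
    also have "\<dots> = ennreal (mu * (Ct * \<bar>norm y - 1\<bar> powr (- \<alpha>)))"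
      using mu Ct by (simp add: ennreal_mult)
    finally have "norm (g y) \<le> mu * (Ct * \<bar>norm y - 1\<bar> powr (- \<alpha>))"
      using mu Ct by (subst (asm) ennreal_le_iff) auto
    then have "norm (g y) powr p \<le> (mu * Ct * \<bar>norm y - 1\<bar> powr (- \<alpha>)) powr p"
      using p by (intro powr_mono2) (auto simp: mult.assoc)
    also have "\<dots> = C1 * \<bar>norm y - 1\<bar> powr (- q)"
      unfolding C1_def q_def using mu Ct by (intro l146) auto
    finally show ?thesis .
  qed
  have far: "norm (g y) powr p \<le> C2 * norm y powr (- S)" if y: "norm y \<ge> 2" for y :: 'a
  proof -
    have "ennreal (norm (g y)) \<le> ennreal mu * (\<integral>\<^sup>+z. ennreal (norm (FK \<alpha> (ball 0 1) y z)) \<partial>lborel)"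
      unfolding g_def mu_def by (rule g_bound_nn[OF a])
    also have "\<dots> \<le> ennreal mu * ennreal (V * (norm y / 2) powr (- (N + \<alpha>)))"
      unfolding V_def N_def by (rule mult_left_mono[OF FK_int_far[OF a(1) y]]) simp
    also have "\<dots> = ennreal (mu * (V * (norm y / 2) powr (- (N + \<alpha>))))"
      using mu V by (simp add: ennreal_mult)
    finally have "norm (g y) \<le> mu * (V * (norm y / 2) powr (- (N + \<alpha>)))"
      using mu V by (subst (asm) ennreal_le_iff) auto
    then have "norm (g y) powr p \<le> (mu * V * (norm y / 2) powr (- (N + \<alpha>))) powr p"
      using p by (intro powr_mono2) (auto simp: mult.assoc)
    also have "\<dots> = (mu * V) powr p * ((norm y / 2) powr (- (N + \<alpha>))) powr p"
      using mu V by (simp add: powr_mult)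
    also have "((norm y / 2) powr (- (N + \<alpha>))) powr p = (norm y / 2) powr (- S)"
      unfolding powr_powr S_def by (simp add: algebra_simps)
    also have "(norm y / 2) powr (- S) = norm y powr (- S) * 2 powr S"
      by (rule l166) simp
    also have "(mu * V) powr p * (norm y powr (- S) * 2 powr S) = C2 * norm y powr (- S)"
      unfolding C2_def by (rule l167)
    finally show ?thesis .
  qed
  have C1nn: "C1 \<ge> 0" by (simp add: C1_def)
  have C2nn: "C2 \<ge> 0" by (simp add: C2_def)
  define F where "F y = ennreal C1 * (indicator (ball (0::'a) 2) y * ennreal (\<bar>norm y - 1\<bar> powr (- q)))
     + ennreal C2 * (indicator {w::'a. 2 \<le> norm w} y * ennreal (norm y powr (- S)))" for y
  have sph: "sphere (0::'a) 1 \<in> null_sets lborel"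
    using negligible_sphere[of "0::'a" 1]
    by (auto simp: null_sets_completion_iff negligible_iff_null_sets negligible_convex_frontier)
  have AE: "AE y in lborel. ennreal (norm (g y) powr p) \<le> F y"
    using AE_not_in[OF sph]
  proof eventually_elim
    case (elim y)
    then have y1: "norm y \<noteq> 1" by simp
    show ?case
    proof (cases "norm y < 2")
      case True
      have ind: "indicator (ball (0::'a) 2) y = (1::ennreal)" using True by (simp add: indicator_def)
      have "ennreal (norm (g y) powr p) \<le> ennreal (C1 * \<bar>norm y - 1\<bar> powr (- q))"
        by (rule ennreal_leI) (rule near[OF y1])
      also have "\<dots> = ennreal C1 * (indicator (ball (0::'a) 2) y * ennreal (\<bar>norm y - 1\<bar> powr (- q)))"
        unfolding ind using C1nn by (simp add: ennreal_mult)
      finally have "ennreal (norm (g y) powr p) \<le> ennreal C1 * (indicator (ball (0::'a) 2) y * ennreal (\<bar>norm y - 1\<bar> powr (- q)))" .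
      then show ?thesis unfolding F_def by (rule order_trans) simp
    next
      case False
      have ind: "indicator {w::'a. 2 \<le> norm w} y = (1::ennreal)" using False by (simp add: indicator_def)
      have "ennreal (norm (g y) powr p) \<le> ennreal (C2 * norm y powr (- S))"
        by (rule ennreal_leI) (rule far, use False in simp)
      also have "\<dots> = ennreal C2 * (indicator {w::'a. 2 \<le> norm w} y * ennreal (norm y powr (- S)))"
        unfolding ind using C2nn by (simp add: ennreal_mult)
      finally have "ennreal (norm (g y) powr p) \<le> ennreal C2 * (indicator {w::'a. 2 \<le> norm w} y * ennreal (norm y powr (- S)))" .
      then show ?thesis unfolding F_def by (rule order_trans) simp
    qed
  qed
  have m1: "(\<lambda>y. indicator (ball (0::'a) 2) y * ennreal (\<bar>norm y - 1\<bar> powr (- q))) \<in> borel_measurable lborel"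
    unfolding measurable_lborel2 by (intro borel_measurable_times_ennreal borel_measurable_indicator) (simp_all, measurable)
  have m2: "(\<lambda>y. indicator {w::'a. 2 \<le> norm w} y * ennreal (norm y powr (- S))) \<in> borel_measurable lborel"
    unfolding measurable_lborel2 by (intro borel_measurable_times_ennreal borel_measurable_indicator) (simp_all, measurable)
  have "(\<integral>\<^sup>+y. ennreal (norm (g y) powr p) \<partial>lborel) \<le> (\<integral>\<^sup>+y. F y \<partial>lborel)"
    by (rule nn_integral_mono_AE[OF AE])
  also have "\<dots> = ennreal C1 * (\<integral>\<^sup>+y. indicator (ball (0::'a) 2) y * ennreal (\<bar>norm y - 1\<bar> powr (- q)) \<partial>lborel)
      + ennreal C2 * (\<integral>\<^sup>+y. indicator {w::'a. 2 \<le> norm w} y * ennreal (norm y powr (- S)) \<partial>lborel)"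
    unfolding F_def
    by (subst nn_integral_add[OF borel_measurable_times_ennreal[OF borel_measurable_const m1] borel_measurable_times_ennreal[OF borel_measurable_const m2]])
       (simp only: nn_integral_cmult[OF m1] nn_integral_cmult[OF m2])
  also have "\<dots> < \<infinity>"
  proof -
    have i1: "(\<integral>\<^sup>+y. indicator (ball (0::'a) 2) y * ennreal (\<bar>norm y - 1\<bar> powr (- q)) \<partial>lborel) < \<infinity>"
      by (rule near_bound) (use q in auto)
    have "(\<integral>\<^sup>+y. indicator {w::'a. 2 \<le> norm w} y * ennreal (norm y powr (- S)) \<partial>lborel)
        \<le> ennreal (unit_ball_vol (real DIM('a)) * 2^DIM('a) * 2 powr (real DIM('a) - S) / (1 - 2 powr (real DIM('a) - S)))"
      by (rule tail_bound) (use S in \<open>auto simp: N_def\<close>)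
    then have i2: "(\<integral>\<^sup>+y. indicator {w::'a. 2 \<le> norm w} y * ennreal (norm y powr (- S)) \<partial>lborel) < \<infinity>"
      using le_less_trans by fastforce
    show ?thesis using i1 i2 by (simp add: ennreal_mult_less_top)
  qed
  finally show ?thesis by (simp add: g_def)
qed


theorem corollary3p10:
  fixes \<alpha> p :: real
  assumes "0 < \<alpha>" "\<alpha> < 1" "1 \<le> p" "p < 1 / \<alpha>"
  shows "\<exists>c>0. \<forall>(x::'a::euclidean_space) r. r > 0 \<longrightarrow>
           Lp_norm p (frac_grad_ind \<alpha> (ball x r)) =
             ennreal (c * r powr (real DIM('a) / p - \<alpha>))"
proof (rule final_assembly)
  show "p > 0" using assms by simp
  show "(\<integral>\<^sup>+y. ennreal (norm (frac_grad_ind \<alpha> (ball (0::'a) 1) y) powr p) \<partial>lborel) < \<infinity>"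
    by (rule I_fin) (use assms in auto)
  show "(\<integral>\<^sup>+y. ennreal (norm (frac_grad_ind \<alpha> (ball (0::'a) 1) y) powr p) \<partial>lborel) > 0"
    by (rule I_pos) (use assms in auto)
qed

end
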